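(* Let $\{M_p\mid p\in P\}$ be a Morse decomposition of a multivector field on a finite simplicial complex $K$, with associated $P$-filtered chain complex $(C,d)$, let $(\bar C,\bar d)$ be a Conley complex of $(C,d)$, let $f:K\to\mathbb R$ be Lyapunov for the Morse decomposition, and let $P_f$ be an $f$-compatible order. Then $H(\bar{\mathbf C},P_f)\cong H(\mathbf C,P_f)\cong H(\mathbf F,P_f)$ as persistence modules.
   Context: $K$ is a finite simplicial complex; a multivector field $\mathcal V$ on $K$ is a partition of $K$ into convex sets $V$ (if $\sigma,\tau\in V$ and $\sigma\le\mu\le\tau$ in the face order then $\mu\in V$); $F_{\mathcal V}(\sigma)=[\sigma]_{\mathcal V}\cup\{\tau:\tau\le\sigma\}$ where $[\sigma]_{\mathcal V}$ is the part containing $\sigma$; a path is a sequence $\sigma_1,\dots,\sigma_r$ with $\sigma_k\in F_{\mathcal V}(\sigma_{k-1})$. A Morse decomposition indexed by a finite poset $(P,\le_P)$ is a partition $K=\bigsqcup_{p\in P}M_p$ such that every path from $M_p$ to $M_q$ has $q\le_P p$. Let $m=|P|$. $(C,d)$: $C_p$ is the $\mathbb Z_2$-span of the simplices in $M_p$ (graded by dimension), $C=\bigoplus_pC_p$ the simplicial chains of $K$ over $\mathbb Z_2$, $d$ the simplicial boundary. For $P$-graded spaces and a linear map $h$, $h_{pq}=\pi_p h\iota_q$, and $h$ is $P$-filtered if $h_{pq}\ne0\Rightarrow p\le_P q$. A $P$-filtered chain complex is a $\mathbb Z_2$ chain complex with a $P$-gradation (compatible with degree) whose differential is $P$-filtered.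 Filtered chain maps are $P$-filtered chain maps; filtered chain maps $\varphi,\psi$ are filtered chain homotopic if $\psi-\varphi=d'S+Sd$ for some $P$-filtered degree-raising-by-one linear $S$; two $P$-filtered complexes are filtered chain homotopic if there are filtered chain maps $\varphi,\varphi'$ between them with $\varphi'\varphi$ and $\varphi\varphi'$ filtered chain homotopic to the identities. A Conley complex of $(C,d)$ is a $P$-filtered chain complex $(\bar C,\bar d)$ filtered chain homotopic to $(C,d)$ with $\bar d_{pp}=0$ for all $p$. $f:K\to\mathbb R$ is Lyapunov if $f$ is constant on each $M_p$, with value $f(p)$, and $p\le_P q\Rightarrow f(p)\le f(q)$. An $f$-compatible order $P_f$ is an enumeration $p_1,\dots,p_m$ of $P$ that is a linear extension of $\le_P$ with $f(p_1)\le\dots\le f(p_m)$. For a $P$-filtered chain complex $(D,\delta)$, $\mathbf D_{p_i}=\bigoplus_{j\le i}D_{p_j}$ with restricted differential is a subcomplex, and $H(\mathbf D,P_f)$ is the persistence module $H_*(\mathbf D_{p_1})\to\dots\to H_*(\mathbf D_{p_m})$ with inclusion-induced maps. $K_i=\bigsqcup_{j\le i}M_{p_j}$ is a subcomplex of $K$, $C(K_i)$ its simplicial chain complex over $\mathbb Z_2$, and $H(\mathbf F,P_f)$ is the module $H_*(C(K_1))\to\dots\to H_*(C(K_m))$ with inclusion-induced maps. *)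

theory Defs
  imports Complex_Main
begin

definition simplicial_complex :: "'v set set \<Rightarrow> bool" where
  "simplicial_complex K \<longleftrightarrow> finite K \<and> (\<forall>\<sigma>\<in>K. finite \<sigma> \<and> \<sigma> \<noteq> {}) \<and>
     (\<forall>\<sigma>\<in>K. \<forall>\<tau>. \<tau> \<subseteq> \<sigma> \<and> \<tau> \<noteq> {} \<longrightarrow> \<tau> \<in> K)"

definition multivector_field :: "'v set set \<Rightarrow> 'v set set set \<Rightarrow> bool" where
  "multivector_field K V \<longleftrightarrow> (\<forall>A\<in>V. A \<noteq> {} \<and> A \<subseteq> K) \<and> \<Union>V = K \<and>
     (\<forall>A\<in>V. \<forall>B\<in>V. A \<noteq> B \<longrightarrow> A \<inter> B = {}) \<and>
     (\<forall>A\<in>V. \<forall>\<sigma>\<in>A. \<forall>\<tau>\<in>A. \<forall>\<mu>. \<sigma> \<subseteq> \<mu> \<and> \<mu> \<subseteq> \<tau> \<longrightarrow> \<mu> \<in> A)"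

definition Fv :: "'v set set \<Rightarrow> 'v set set set \<Rightarrow> 'v set \<Rightarrow> 'v set set" where
  "Fv K V \<sigma> = \<Union>{A\<in>V. \<sigma> \<in> A} \<union> {\<tau>\<in>K. \<tau> \<subseteq> \<sigma>}"

definition is_path :: "'v set set \<Rightarrow> 'v set set set \<Rightarrow> 'v set list \<Rightarrow> bool" where
  "is_path K V xs \<longleftrightarrow> xs \<noteq> [] \<and>
     (\<forall>k. 0 < k \<and> k < length xs \<longrightarrow> xs ! k \<in> Fv K V (xs ! (k - 1)))"

definition poset_on :: "'p set \<Rightarrow> ('p \<Rightarrow> 'p \<Rightarrow> bool) \<Rightarrow> bool" where
  "poset_on P le \<longleftrightarrow> (\<forall>p\<in>P. le p p) \<and> (\<forall>p\<in>P. \<forall>q\<in>P. le p q \<and> le q p \<longrightarrow> p = q) \<and>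
     (\<forall>p\<in>P. \<forall>q\<in>P. \<forall>r\<in>P. le p q \<and> le q r \<longrightarrow> le p r)"

definition morse_decomposition ::
  "'v set set \<Rightarrow> 'v set set set \<Rightarrow> 'p set \<Rightarrow> ('p \<Rightarrow> 'p \<Rightarrow> bool) \<Rightarrow> ('p \<Rightarrow> 'v set set) \<Rightarrow> bool" where
  "morse_decomposition K V P le M \<longleftrightarrow> finite P \<and> poset_on P le \<and>
     (\<forall>p\<in>P. M p \<noteq> {}) \<and> (\<forall>p\<in>P. \<forall>q\<in>P. p \<noteq> q \<longrightarrow> M p \<inter> M q = {}) \<and>
     \<Union>(M ` P) = K \<and>
     (\<forall>xs p q. p \<in> P \<and> q \<in> P \<and> is_path K V xs \<and> hd xs \<in> M p \<and> last xs \<in> M q \<longrightarrow> le q p)"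

definition morse_idx :: "'p set \<Rightarrow> ('p \<Rightarrow> 'v set set) \<Rightarrow> 'v set \<Rightarrow> 'p" where
  "morse_idx P M \<sigma> = (THE p. p \<in> P \<and> \<sigma> \<in> M p)"

text \<open>A graded Z2-vector space with a homogeneous basis; every element of the
  basis carries a degree and a P-index. Chains are finite subsets of the basis (Z2
  coefficients), addition is symmetric difference. A linear map is given by the images
  of basis elements; the differential is given by the boundary of basis elements.\<close>
record ('b, 'p) bcx =
  bas :: "'b set"
  deg :: "'b \<Rightarrow> int"
  idx :: "'b \<Rightarrow> 'p"
  bd  :: "'b \<Rightarrow> 'b set"

definition sdiff :: "'a set \<Rightarrow> 'a set \<Rightarrow> 'a set" where
  "sdiff A B = (A - B) \<union> (B - A)"

text \<open>Z2-linear extension of a map on basis elements to a (finite) chain.\<close>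
definition lin :: "('a \<Rightarrow> 'b set) \<Rightarrow> 'a set \<Rightarrow> 'b set" where
  "lin h c = {y. odd (card {x\<in>c. y \<in> h x})}"

definition pfcc :: "'p set \<Rightarrow> ('p \<Rightarrow> 'p \<Rightarrow> bool) \<Rightarrow> ('b, 'p) bcx \<Rightarrow> bool" where
  "pfcc P le C \<longleftrightarrow> (\<forall>x\<in>bas C. idx C x \<in> P \<and> finite (bd C x) \<and> bd C x \<subseteq> bas C \<and>
      (\<forall>y\<in>bd C x. deg C y = deg C x - 1 \<and> le (idx C y) (idx C x)) \<and>
      lin (bd C) (bd C x) = {})"

definition lmap :: "('a, 'p) bcx \<Rightarrow> ('b, 'p) bcx \<Rightarrow> int \<Rightarrow> ('a \<Rightarrow> 'b set) \<Rightarrow> bool" where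
  "lmap C D k h \<longleftrightarrow> (\<forall>x\<in>bas C. finite (h x) \<and> h x \<subseteq> bas D \<and> (\<forall>y\<in>h x. deg D y = deg C x + k))"

definition pfiltered :: "('p \<Rightarrow> 'p \<Rightarrow> bool) \<Rightarrow> ('a, 'p) bcx \<Rightarrow> ('b, 'p) bcx \<Rightarrow> ('a \<Rightarrow> 'b set) \<Rightarrow> bool" where
  "pfiltered le C D h \<longleftrightarrow> (\<forall>x\<in>bas C. \<forall>y\<in>h x. le (idx D y) (idx C x))"

definition fchain_map :: "('p \<Rightarrow> 'p \<Rightarrow> bool) \<Rightarrow> ('a, 'p) bcx \<Rightarrow> ('b, 'p) bcx \<Rightarrow> ('a \<Rightarrow> 'b set) \<Rightarrow> bool" where
  "fchain_map le C D h \<longleftrightarrow> lmap C D 0 h \<and> pfiltered le C D h \<and>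
     (\<forall>x\<in>bas C. lin (bd D) (h x) = lin h (bd C x))"

definition fhomotopic ::
  "('p \<Rightarrow> 'p \<Rightarrow> bool) \<Rightarrow> ('a, 'p) bcx \<Rightarrow> ('b, 'p) bcx \<Rightarrow> ('a \<Rightarrow> 'b set) \<Rightarrow> ('a \<Rightarrow> 'b set) \<Rightarrow> bool" where
  "fhomotopic le C D \<phi> \<psi> \<longleftrightarrow> (\<exists>S. lmap C D 1 S \<and> pfiltered le C D S \<and>
     (\<forall>x\<in>bas C. sdiff (\<psi> x) (\<phi> x) = sdiff (lin (bd D) (S x)) (lin S (bd C x))))"

definition fhtpy_equiv :: "('p \<Rightarrow> 'p \<Rightarrow> bool) \<Rightarrow> ('a, 'p) bcx \<Rightarrow> ('b, 'p) bcx \<Rightarrow> bool" where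
  "fhtpy_equiv le C D \<longleftrightarrow> (\<exists>\<phi> \<phi>'. fchain_map le C D \<phi> \<and> fchain_map le D C \<phi>' \<and>
     fhomotopic le C C (\<lambda>x. lin \<phi>' (\<phi> x)) (\<lambda>x. {x}) \<and>
     fhomotopic le D D (\<lambda>x. lin \<phi> (\<phi>' x)) (\<lambda>x. {x}))"

definition conley_complex :: "'p set \<Rightarrow> ('p \<Rightarrow> 'p \<Rightarrow> bool) \<Rightarrow> ('a, 'p) bcx \<Rightarrow> ('b, 'p) bcx \<Rightarrow> bool" where
  "conley_complex P le C Cb \<longleftrightarrow> pfcc P le Cb \<and> fhtpy_equiv le C Cb \<and>
     (\<forall>x\<in>bas Cb. \<forall>y\<in>bd Cb x. idx Cb y \<noteq> idx Cb x)"

definition simp_cx :: "'v set set \<Rightarrow> ('v set \<Rightarrow> 'p) \<Rightarrow> ('v set, 'p) bcx" where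
  "simp_cx L ix = \<lparr>bas = L, deg = (\<lambda>\<sigma>. int (card \<sigma>) - 1), idx = ix,
      bd = (\<lambda>\<sigma>. {\<sigma> - {v} | v. v \<in> \<sigma> \<and> 2 \<le> card \<sigma>})\<rparr>"

definition lyapunov :: "'p set \<Rightarrow> ('p \<Rightarrow> 'p \<Rightarrow> bool) \<Rightarrow> ('p \<Rightarrow> 'v set set) \<Rightarrow> ('v set \<Rightarrow> real) \<Rightarrow> ('p \<Rightarrow> real) \<Rightarrow> bool" where
  "lyapunov P le M f fP \<longleftrightarrow> (\<forall>p\<in>P. \<forall>\<sigma>\<in>M p. f \<sigma> = fP p) \<and>
     (\<forall>p\<in>P. \<forall>q\<in>P. le p q \<longrightarrow> fP p \<le> fP q)"

text \<open>f-compatible order p_1,...,p_m given as the list ps (0-indexed).\<close>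
definition f_compatible :: "'p set \<Rightarrow> ('p \<Rightarrow> 'p \<Rightarrow> bool) \<Rightarrow> ('p \<Rightarrow> real) \<Rightarrow> 'p list \<Rightarrow> bool" where
  "f_compatible P le fP ps \<longleftrightarrow> distinct ps \<and> set ps = P \<and>
     (\<forall>i<length ps. \<forall>j<length ps. le (ps ! i) (ps ! j) \<longrightarrow> i \<le> j) \<and>
     (\<forall>i j. i \<le> j \<and> j < length ps \<longrightarrow> fP (ps ! i) \<le> fP (ps ! j))"

definition cycles :: "('b, 'p) bcx \<Rightarrow> int \<Rightarrow> 'b set set" where
  "cycles C n = {c. finite c \<and> c \<subseteq> bas C \<and> (\<forall>x\<in>c. deg C x = n) \<and> lin (bd C) c = {}}"

definition boundaries :: "('b, 'p) bcx \<Rightarrow> int \<Rightarrow> 'b set set" where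
  "boundaries C n = {lin (bd C) c | c. finite c \<and> c \<subseteq> bas C \<and> (\<forall>x\<in>c. deg C x = n + 1)}"

definition homology :: "('b, 'p) bcx \<Rightarrow> int \<Rightarrow> 'b set set set" where
  "homology C n = (\<lambda>z. (\<lambda>b. sdiff z b) ` boundaries C n) ` cycles C n"

definition hadd :: "'b set set \<Rightarrow> 'b set set \<Rightarrow> 'b set set" where
  "hadd X Y = {sdiff x y | x y. x \<in> X \<and> y \<in> Y}"

text \<open>Map induced by inclusion into the complex D: a class is sent to the class of its
  representatives in D.\<close>
definition hincl :: "('b, 'p) bcx \<Rightarrow> int \<Rightarrow> 'b set set \<Rightarrow> 'b set set" where
  "hincl D n X = {sdiff z b | z b. z \<in> X \<and> b \<in> boundaries D n}"

text \<open>Isomorphism (in degree n) of the persistence modules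
  H_n(C 0) -> ... -> H_n(C (m-1)) and H_n(D 0) -> ... -> H_n(D (m-1))
  with inclusion-induced maps: a family of Z2-linear (= additive) bijections commuting
  with the structure maps.\<close>
definition hpm_iso :: "nat \<Rightarrow> int \<Rightarrow> (nat \<Rightarrow> ('a, 'p) bcx) \<Rightarrow> (nat \<Rightarrow> ('b, 'q) bcx) \<Rightarrow> bool" where
  "hpm_iso m n C D \<longleftrightarrow> (\<exists>\<phi>.
     (\<forall>i<m. bij_betw (\<phi> i) (homology (C i) n) (homology (D i) n) \<and>
        (\<forall>X\<in>homology (C i) n. \<forall>Y\<in>homology (C i) n. \<phi> i (hadd X Y) = hadd (\<phi> i X) (\<phi> i Y))) \<and>
     (\<forall>i. Suc i < m \<longrightarrow> (\<forall>X\<in>homology (C i) n.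
        \<phi> (Suc i) (hincl (C (Suc i)) n X) = hincl (D (Suc i)) n (\<phi> i X))))"

text \<open>The subcomplex D_{p_{i+1}} = sum of D_{p_j}, j \<le> i (0-indexed).\<close>
definition sub_cx :: "('b, 'p) bcx \<Rightarrow> 'p list \<Rightarrow> nat \<Rightarrow> ('b, 'p) bcx" where
  "sub_cx C ps i = C\<lparr>bas := {x\<in>bas C. idx C x \<in> set (take (Suc i) ps)}\<rparr>"

text \<open>K_{i+1} = union of M_{p_j}, j \<le> i (0-indexed).\<close>
definition Kpre :: "('p \<Rightarrow> 'v set set) \<Rightarrow> 'p list \<Rightarrow> nat \<Rightarrow> 'v set set" where
  "Kpre M ps i = \<Union>(M ` set (take (Suc i) ps))"

end

theory Submission
  imports Defs
begin


lemma sdiff_mem: "y \<in> sdiff A B \<longleftrightarrow> (y \<in> A) \<noteq> (y \<in> B)"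
  by (auto simp: sdiff_def)

lemma sdiff_empty[simp]: "sdiff A {} = A" "sdiff {} A = A" "sdiff A A = {}"
  by (auto simp: sdiff_def)

lemma sdiff_comm: "sdiff A B = sdiff B A" by (auto simp: sdiff_def)
lemma sdiff_assoc: "sdiff (sdiff A B) C = sdiff A (sdiff B C)" by (auto simp: sdiff_def)
lemma sdiff_cancel: "sdiff A (sdiff A B) = B" by (auto simp: sdiff_def)
lemma finite_sdiff: "finite A \<Longrightarrow> finite B \<Longrightarrow> finite (sdiff A B)" by (auto simp: sdiff_def)

lemma card_sdiff_parity:
  assumes "finite A" "finite B"
  shows "card (sdiff A B) + 2 * card (A \<inter> B) = card A + card B"
proof -
  have a: "card A = card (A - B) + card (A \<inter> B)"
    using assms by (metis Int_Diff_disjoint Un_Diff_Int card_Un_disjoint finite_Diff finite_Int inf_commute)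
  have b: "card B = card (B - A) + card (A \<inter> B)"
    using assms by (metis Int_Diff_disjoint Un_Diff_Int card_Un_disjoint finite_Diff finite_Int inf_commute)
  have c: "card (sdiff A B) = card (A - B) + card (B - A)"
    unfolding sdiff_def using assms by (intro card_Un_disjoint) auto
  show ?thesis using a b c by simp
qed

lemma odd_card_sdiff: "finite A \<Longrightarrow> finite B \<Longrightarrow> odd (card (sdiff A B)) \<longleftrightarrow> odd (card A) \<noteq> odd (card B)"
  using card_sdiff_parity[of A B] by (metis even_add even_mult_iff even_numeral)

lemma lin_empty[simp]: "lin h {} = {}" by (simp add: lin_def)
lemma lin_zero: "lin (\<lambda>_. {}) c = {}" by (simp add: lin_def)

lemma lin_sdiff: assumes "finite a" "finite b"
  shows "lin h (sdiff a b) = sdiff (lin h a) (lin h b)"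
proof -
  have "\<And>y. {x\<in>sdiff a b. y \<in> h x} = sdiff {x\<in>a. y \<in> h x} {x\<in>b. y \<in> h x}"
    by (auto simp: sdiff_def)
  then show ?thesis using assms
    by (auto simp: lin_def sdiff_mem odd_card_sdiff)
qed

lemma lin_fun_sdiff: assumes "finite c"
  shows "lin (\<lambda>x. sdiff (g x) (h x)) c = sdiff (lin g c) (lin h c)"
proof -
  have "\<And>y. {x\<in>c. y \<in> sdiff (g x) (h x)} = sdiff {x\<in>c. y \<in> g x} {x\<in>c. y \<in> h x}"
    by (auto simp: sdiff_def)
  then show ?thesis using assms
    by (auto simp: lin_def sdiff_mem odd_card_sdiff)
qed

lemma lin_cong: "(\<And>x. x \<in> c \<Longrightarrow> g x = h x) \<Longrightarrow> lin g c = lin h c"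
  unfolding lin_def by (metis (mono_tags, lifting) Collect_cong)

lemma lin_single[simp]: "lin h {x} = h x"
proof -
  have "\<And>y. {x'\<in>{x}. y \<in> h x'} = (if y \<in> h x then {x} else {})" by auto
  then show ?thesis by (auto simp: lin_def)
qed

lemma lin_subset: "lin h c \<subseteq> \<Union>(h ` c)"
proof
  fix y assume "y \<in> lin h c"
  then have "odd (card {x\<in>c. y \<in> h x})" by (simp add: lin_def)
  then have "{x\<in>c. y \<in> h x} \<noteq> {}" by (metis card.empty even_zero)
  then show "y \<in> \<Union>(h ` c)" by auto
qed

lemma finite_lin: "finite c \<Longrightarrow> (\<And>x. x \<in> c \<Longrightarrow> finite (h x)) \<Longrightarrow> finite (lin h c)"
  by (meson finite_UN_I finite_subset lin_subset)

lemma lin_insert: "finite c \<Longrightarrow> x \<notin> c \<Longrightarrow> lin h (insert x c) = sdiff (h x) (lin h c)"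
proof -
  assume "finite c" "x \<notin> c"
  then have "insert x c = sdiff {x} c" by (auto simp: sdiff_def)
  then show ?thesis using \<open>finite c\<close> lin_sdiff[of "{x}" c h] by simp
qed

lemma lin_comp: "finite c \<Longrightarrow> (\<And>x. x \<in> c \<Longrightarrow> finite (g x)) \<Longrightarrow>
   lin h (lin g c) = lin (\<lambda>x. lin h (g x)) c"
proof (induction c rule: finite_induct)
  case empty then show ?case by simp
next
  case (insert x c)
  have fl: "finite (lin g c)" using insert by (intro finite_lin) auto
  have "lin h (lin g (insert x c)) = lin h (sdiff (g x) (lin g c))"
    using insert by (simp add: lin_insert)
  also have "\<dots> = sdiff (lin h (g x)) (lin h (lin g c))"
    using insert fl by (simp add: lin_sdiff)
  also have "\<dots> = sdiff (lin h (g x)) (lin (\<lambda>x. lin h (g x)) c)"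
    using insert by simp
  also have "\<dots> = lin (\<lambda>x. lin h (g x)) (insert x c)"
    using insert by (simp add: lin_insert)
  finally show ?case .
qed

lemma lin_id: "finite c \<Longrightarrow> lin (\<lambda>x. {x}) c = c"
proof (induction c rule: finite_induct)
  case empty then show ?case by simp
next
  case (insert x c) then show ?case by (simp add: lin_insert sdiff_def)
qed



definition grp :: "'a set set \<Rightarrow> bool" where
  "grp B \<longleftrightarrow> {} \<in> B \<and> (\<forall>a\<in>B. \<forall>b\<in>B. sdiff a b \<in> B)"

definition cs :: "'a set set \<Rightarrow> 'a set \<Rightarrow> 'a set set" where
  "cs B z = (\<lambda>b. sdiff z b) ` B"

lemma cs_map:
  assumes "grp B2" "\<And>b. b \<in> B \<Longrightarrow> sdiff (g (sdiff z b)) (g z) \<in> B2" "{} \<in> B"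
  shows "{sdiff (g x) b | x b. x \<in> cs B z \<and> b \<in> B2} = cs B2 (g z)"
proof (intro equalityI subsetI)
  fix y assume "y \<in> {sdiff (g x) b | x b. x \<in> cs B z \<and> b \<in> B2}"
  then obtain b1 b where y: "y = sdiff (g (sdiff z b1)) b" "b1 \<in> B" "b \<in> B2"
    by (auto simp: cs_def)
  let ?e = "sdiff (g (sdiff z b1)) (g z)"
  have "?e \<in> B2" using assms y by auto
  then have "sdiff ?e b \<in> B2" using assms(1) y unfolding grp_def by auto
  moreover have "y = sdiff (g z) (sdiff ?e b)" using y by (auto simp: sdiff_def)
  ultimately show "y \<in> cs B2 (g z)" by (auto simp: cs_def)
next
  fix y assume "y \<in> cs B2 (g z)"
  then obtain b where "y = sdiff (g z) b" "b \<in> B2" by (auto simp: cs_def)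
  moreover have "z \<in> cs B z" using assms(3) by (force simp: cs_def)
  ultimately show "y \<in> {sdiff (g x) b | x b. x \<in> cs B z \<and> b \<in> B2}" by blast
qed

lemma cs_eq: assumes "grp B" "sdiff z w \<in> B" shows "cs B z = cs B w"
proof -
  have "\<And>b. b \<in> B \<Longrightarrow> sdiff (sdiff z w) b \<in> B" "\<And>b. b \<in> B \<Longrightarrow> sdiff (sdiff z w) b \<in> B"
    using assms unfolding grp_def by auto
  have 1: "\<And>b. sdiff z b = sdiff w (sdiff (sdiff z w) b)" by (auto simp: sdiff_def)
  have 2: "\<And>b. sdiff w b = sdiff z (sdiff (sdiff z w) b)" by (auto simp: sdiff_def)
  show ?thesis unfolding cs_def
  proof (intro equalityI subsetI)
    fix y assume "y \<in> (\<lambda>b. sdiff z b) ` B"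
    then obtain b where "b \<in> B" "y = sdiff z b" by auto
    then show "y \<in> (\<lambda>b. sdiff w b) ` B" using 1 assms unfolding grp_def by blast
  next
    fix y assume "y \<in> (\<lambda>b. sdiff w b) ` B"
    then obtain b where "b \<in> B" "y = sdiff w b" by auto
    then show "y \<in> (\<lambda>b. sdiff z b) ` B" using 2 assms unfolding grp_def by blast
  qed
qed

lemma hadd_cs: assumes "grp B" shows "hadd (cs B z) (cs B w) = cs B (sdiff z w)"
proof (intro equalityI subsetI)
  fix y assume "y \<in> hadd (cs B z) (cs B w)"
  then obtain b b' where "b \<in> B" "b' \<in> B" "y = sdiff (sdiff z b) (sdiff w b')"
    by (auto simp: hadd_def cs_def)
  moreover then have "sdiff b b' \<in> B" using assms by (auto simp: grp_def)
  moreover have "sdiff (sdiff z b) (sdiff w b') = sdiff (sdiff z w) (sdiff b b')"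
    by (auto simp: sdiff_def)
  ultimately show "y \<in> cs B (sdiff z w)" by (auto simp: cs_def)
next
  fix y assume "y \<in> cs B (sdiff z w)"
  then obtain b where "b \<in> B" "y = sdiff (sdiff z w) b" by (auto simp: cs_def)
  moreover have "{} \<in> B" using assms by (auto simp: grp_def)
  moreover have "sdiff (sdiff z w) b = sdiff (sdiff z b) (sdiff w {})" by (auto simp: sdiff_def)
  ultimately show "y \<in> hadd (cs B z) (cs B w)" unfolding hadd_def cs_def by blast
qed

lemma homology_cs: "homology C n = cs (boundaries C n) ` cycles C n"
  by (simp add: homology_def cs_def)



lemma sdiff_sdiff_left: "sdiff (sdiff A B) A = B" by (auto simp: sdiff_def)

lemma grp_boundaries: "grp (boundaries C n)"
  unfolding grp_def
proof (intro conjI ballI)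
  show "{} \<in> boundaries C n" unfolding boundaries_def
    by (rule CollectI, rule exI[of _ "{}"]) simp
next
  fix a b assume "a \<in> boundaries C n" "b \<in> boundaries C n"
  then obtain c c' where c: "a = lin (bd C) c" "finite c" "c \<subseteq> bas C" "\<forall>x\<in>c. deg C x = n + 1"
    and c': "b = lin (bd C) c'" "finite c'" "c' \<subseteq> bas C" "\<forall>x\<in>c'. deg C x = n + 1"
    unfolding boundaries_def by blast
  have "sdiff a b = lin (bd C) (sdiff c c')" using c c' by (simp add: lin_sdiff)
  moreover have "finite (sdiff c c')" "sdiff c c' \<subseteq> bas C" "\<forall>x\<in>sdiff c c'. deg C x = n + 1"
    using c c' by (auto simp: sdiff_def)
  ultimately show "sdiff a b \<in> boundaries C n" unfolding boundaries_def by blast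
qed

lemma chain_on_chains:
  assumes "finite c" "c \<subseteq> A" "\<And>x. x \<in> A \<Longrightarrow> finite (\<phi> x) \<and> finite (bC x) \<and> lin bD (\<phi> x) = lin \<phi> (bC x)"
  shows "lin bD (lin \<phi> c) = lin \<phi> (lin bC c)"
proof -
  have "lin bD (lin \<phi> c) = lin (\<lambda>x. lin bD (\<phi> x)) c" using assms by (intro lin_comp) auto
  also have "\<dots> = lin (\<lambda>x. lin \<phi> (bC x)) c" using assms by (intro lin_cong) auto
  also have "\<dots> = lin \<phi> (lin bC c)" using assms by (intro lin_comp[symmetric]) auto
  finally show ?thesis .
qed

lemma lin_props:
  assumes "finite c" "c \<subseteq> A" "\<And>x. x \<in> A \<Longrightarrow> finite (\<phi> x) \<and> \<phi> x \<subseteq> A' \<and> (\<forall>y\<in>\<phi> x. dD y = dC x + k)"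
    "\<forall>x\<in>c. dC x = n"
  shows "finite (lin \<phi> c) \<and> lin \<phi> c \<subseteq> A' \<and> (\<forall>y\<in>lin \<phi> c. dD y = n + k)"
proof -
  have "lin \<phi> c \<subseteq> \<Union>(\<phi> ` c)" by (rule lin_subset)
  moreover have "finite (lin \<phi> c)" using assms by (intro finite_lin) auto
  ultimately show ?thesis using assms by fastforce
qed

locale lev =
  fixes C :: "('a,'p) bcx" and D :: "('b,'q) bcx" and \<phi> \<psi> S
  assumes fbC: "\<And>x. x \<in> bas C \<Longrightarrow> finite (bd C x)"
  and phi: "\<And>x. x \<in> bas C \<Longrightarrow> finite (\<phi> x) \<and> \<phi> x \<subseteq> bas D \<and> (\<forall>y\<in>\<phi> x. deg D y = deg C x + 0) \<and>
      lin (bd D) (\<phi> x) = lin \<phi> (bd C x)"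
  and psi: "\<And>x. x \<in> bas D \<Longrightarrow> finite (\<psi> x) \<and> \<psi> x \<subseteq> bas C \<and> (\<forall>y\<in>\<psi> x. deg C y = deg D x + 0)"
  and S: "\<And>x. x \<in> bas C \<Longrightarrow> finite (S x) \<and> S x \<subseteq> bas C \<and> (\<forall>y\<in>S x. deg C y = deg C x + 1) \<and>
      sdiff {x} (lin \<psi> (\<phi> x)) = sdiff (lin (bd C) (S x)) (lin S (bd C x))"
begin

lemma cyc: assumes "z \<in> cycles C n" shows "lin \<phi> z \<in> cycles D n"
proof -
  have z: "finite z" "z \<subseteq> bas C" "\<forall>x\<in>z. deg C x = n" "lin (bd C) z = {}"
    using assms by (auto simp: cycles_def)
  have "finite (lin \<phi> z) \<and> lin \<phi> z \<subseteq> bas D \<and> (\<forall>y\<in>lin \<phi> z. deg D y = n + 0)"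
    using z phi by (intro lin_props[where A="bas C"]) auto
  moreover have "lin (bd D) (lin \<phi> z) = lin \<phi> (lin (bd C) z)"
    using z phi fbC by (intro chain_on_chains[where A="bas C"]) auto
  ultimately show ?thesis using z by (simp add: cycles_def)
qed

lemma bdry: assumes "b \<in> boundaries C n" shows "lin \<phi> b \<in> boundaries D n \<and> finite b"
proof -
  obtain c where c: "b = lin (bd C) c" "finite c" "c \<subseteq> bas C" "\<forall>x\<in>c. deg C x = n + 1"
    using assms unfolding boundaries_def by blast
  have p: "finite (lin \<phi> c) \<and> lin \<phi> c \<subseteq> bas D \<and> (\<forall>y\<in>lin \<phi> c. deg D y = n + 1 + 0)"
    using c phi by (intro lin_props[where A="bas C"]) auto
  have "lin (bd D) (lin \<phi> c) = lin \<phi> (lin (bd C) c)"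
    using c phi fbC by (intro chain_on_chains[where A="bas C"]) auto
  then have "lin \<phi> b \<in> boundaries D n" using p c unfolding boundaries_def by auto
  moreover have "finite b" using c fbC by (auto intro!: finite_lin)
  ultimately show ?thesis by blast
qed

lemma Phi_cs: assumes "finite z"
  shows "{sdiff (lin \<phi> x) b | x b. x \<in> cs (boundaries C n) z \<and> b \<in> boundaries D n}
     = cs (boundaries D n) (lin \<phi> z)"
proof (rule cs_map[OF grp_boundaries])
  fix b assume b: "b \<in> boundaries C n"
  then have "finite b" using bdry by blast
  then have "sdiff (lin \<phi> (sdiff z b)) (lin \<phi> z) = lin \<phi> b"
    using assms by (simp add: lin_sdiff sdiff_sdiff_left)
  then show "sdiff (lin \<phi> (sdiff z b)) (lin \<phi> z) \<in> boundaries D n" using bdry b by simp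
next
  show "{} \<in> boundaries C n" using grp_boundaries by (auto simp: grp_def)
qed

lemma htpy: assumes "z \<in> cycles C n" shows "sdiff (lin \<psi> (lin \<phi> z)) z \<in> boundaries C n"
proof -
  have z: "finite z" "z \<subseteq> bas C" "\<forall>x\<in>z. deg C x = n" "lin (bd C) z = {}"
    using assms by (auto simp: cycles_def)
  have "sdiff z (lin \<psi> (lin \<phi> z)) = sdiff (lin (\<lambda>x. {x}) z) (lin (\<lambda>x. lin \<psi> (\<phi> x)) z)"
    using z phi by (simp add: lin_id lin_comp subset_iff)
  also have "\<dots> = lin (\<lambda>x. sdiff {x} (lin \<psi> (\<phi> x))) z" using z by (simp add: lin_fun_sdiff)
  also have "\<dots> = lin (\<lambda>x. sdiff (lin (bd C) (S x)) (lin S (bd C x))) z"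
    using z S by (intro lin_cong) auto
  also have "\<dots> = sdiff (lin (\<lambda>x. lin (bd C) (S x)) z) (lin (\<lambda>x. lin S (bd C x)) z)"
    using z by (simp add: lin_fun_sdiff)
  also have "\<dots> = sdiff (lin (bd C) (lin S z)) (lin S (lin (bd C) z))"
  proof -
    have "lin (bd C) (lin S z) = lin (\<lambda>x. lin (bd C) (S x)) z" using z S by (intro lin_comp) auto
    moreover have "lin S (lin (bd C) z) = lin (\<lambda>x. lin S (bd C x)) z" using z fbC by (intro lin_comp) auto
    ultimately show ?thesis by simp
  qed
  also have "\<dots> = lin (bd C) (lin S z)" using z by simp
  finally have e: "sdiff z (lin \<psi> (lin \<phi> z)) = lin (bd C) (lin S z)" .
  have "finite (lin S z) \<and> lin S z \<subseteq> bas C \<and> (\<forall>y\<in>lin S z. deg C y = n + 1)"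
    using z S by (intro lin_props[where A="bas C"]) auto
  then have "lin (bd C) (lin S z) \<in> boundaries C n" unfolding boundaries_def by blast
  then show ?thesis using e by (simp add: sdiff_comm)
qed

end



lemma bd_mono:
  assumes "bas C \<subseteq> bas C'" "deg C' = deg C" "bd C' = bd C"
  shows "boundaries C n \<subseteq> boundaries C' n"
  using assms unfolding boundaries_def by auto

lemma hincl_cs:
  assumes "B \<subseteq> boundaries D n" "{} \<in> B"
  shows "hincl D n (cs B z) = cs (boundaries D n) z"
  unfolding hincl_def
  using cs_map[OF grp_boundaries, of B "\<lambda>x. x" z D n] assms
  by (simp add: sdiff_sdiff_left subset_iff)

lemma hpm_iso_generic:
  fixes C :: "nat \<Rightarrow> ('a,'p) bcx" and D :: "nat \<Rightarrow> ('b,'q) bcx"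
  assumes LC: "\<And>i. i < m \<Longrightarrow> lev (C i) (D i) \<phi> \<psi> S"
  and LD: "\<And>i. i < m \<Longrightarrow> lev (D i) (C i) \<psi> \<phi> T"
  and nC: "\<And>i. Suc i < m \<Longrightarrow> bas (C i) \<subseteq> bas (C (Suc i)) \<and> deg (C (Suc i)) = deg (C i) \<and> bd (C (Suc i)) = bd (C i)"
  and nD: "\<And>i. Suc i < m \<Longrightarrow> bas (D i) \<subseteq> bas (D (Suc i)) \<and> deg (D (Suc i)) = deg (D i) \<and> bd (D (Suc i)) = bd (D i)"
  shows "hpm_iso m n C D"
proof -
  define Phi where "Phi = (\<lambda>i X. {sdiff (lin \<phi> x) b | x b. x \<in> X \<and> b \<in> boundaries (D i) n})"
  define Psi where "Psi = (\<lambda>i X. {sdiff (lin \<psi> x) b | x b. x \<in> X \<and> b \<in> boundaries (C i) n})"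
  have e0: "\<And>E k. {} \<in> boundaries E k" using grp_boundaries unfolding grp_def by blast
  have PhiC: "Phi i (cs (boundaries (C i) n) z) = cs (boundaries (D i) n) (lin \<phi> z)"
    if "i < m" "finite z" for i z
    unfolding Phi_def using lev.Phi_cs[OF LC[OF that(1)] that(2)] .
  have PsiD: "Psi i (cs (boundaries (D i) n) z) = cs (boundaries (C i) n) (lin \<psi> z)"
    if "i < m" "finite z" for i z
    unfolding Psi_def using lev.Phi_cs[OF LD[OF that(1)] that(2)] .
  have fin: "\<And>E z. z \<in> cycles E n \<Longrightarrow> finite z" by (simp add: cycles_def)
  show ?thesis unfolding hpm_iso_def
  proof (intro exI[of _ Phi] conjI allI impI ballI)
    fix i assume i: "i < m"
    show "bij_betw (Phi i) (homology (C i) n) (homology (D i) n)"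
    proof (rule bij_betw_byWitness[where f'="Psi i"])
      show "\<forall>X\<in>homology (C i) n. Psi i (Phi i X) = X"
      proof
        fix X assume "X \<in> homology (C i) n"
        then obtain z where z: "z \<in> cycles (C i) n" "X = cs (boundaries (C i) n) z"
          by (auto simp: homology_cs)
        have c: "lin \<phi> z \<in> cycles (D i) n" using lev.cyc[OF LC[OF i] z(1)] .
        have "Psi i (Phi i X) = cs (boundaries (C i) n) (lin \<psi> (lin \<phi> z))"
          using z c PhiC[OF i] PsiD[OF i] fin[OF z(1)] fin[OF c] by simp
        also have "\<dots> = X" using z lev.htpy[OF LC[OF i] z(1)] by (simp add: cs_eq grp_boundaries)
        finally show "Psi i (Phi i X) = X" .
      qed
      show "\<forall>X\<in>homology (D i) n. Phi i (Psi i X) = X"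
      proof
        fix X assume "X \<in> homology (D i) n"
        then obtain z where z: "z \<in> cycles (D i) n" "X = cs (boundaries (D i) n) z"
          by (auto simp: homology_cs)
        have c: "lin \<psi> z \<in> cycles (C i) n" using lev.cyc[OF LD[OF i] z(1)] .
        have "Phi i (Psi i X) = cs (boundaries (D i) n) (lin \<phi> (lin \<psi> z))"
          using z c PhiC[OF i] PsiD[OF i] fin[OF z(1)] fin[OF c] by simp
        also have "\<dots> = X" using z lev.htpy[OF LD[OF i] z(1)] by (simp add: cs_eq grp_boundaries)
        finally show "Phi i (Psi i X) = X" .
      qed
      show "Phi i ` homology (C i) n \<subseteq> homology (D i) n"
      proof
        fix Y assume "Y \<in> Phi i ` homology (C i) n"
        then obtain z where z: "z \<in> cycles (C i) n" "Y = Phi i (cs (boundaries (C i) n) z)"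
          by (auto simp: homology_cs)
        then have "Y = cs (boundaries (D i) n) (lin \<phi> z)" using PhiC[OF i] fin[OF z(1)] by simp
        then show "Y \<in> homology (D i) n" using lev.cyc[OF LC[OF i] z(1)] by (simp add: homology_cs)
      qed
      show "Psi i ` homology (D i) n \<subseteq> homology (C i) n"
      proof
        fix Y assume "Y \<in> Psi i ` homology (D i) n"
        then obtain z where z: "z \<in> cycles (D i) n" "Y = Psi i (cs (boundaries (D i) n) z)"
          by (auto simp: homology_cs)
        then have "Y = cs (boundaries (C i) n) (lin \<psi> z)" using PsiD[OF i] fin[OF z(1)] by simp
        then show "Y \<in> homology (C i) n" using lev.cyc[OF LD[OF i] z(1)] by (simp add: homology_cs)
      qed
    qed
  next
    fix i X Y assume i: "i < m" and X: "X \<in> homology (C i) n" and Y: "Y \<in> homology (C i) n"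
    obtain z where z: "z \<in> cycles (C i) n" "X = cs (boundaries (C i) n) z"
      using X by (auto simp: homology_cs)
    obtain w where w: "w \<in> cycles (C i) n" "Y = cs (boundaries (C i) n) w"
      using Y by (auto simp: homology_cs)
    have fz: "finite z" "finite w" using z w fin by auto
    have "Phi i (hadd X Y) = Phi i (cs (boundaries (C i) n) (sdiff z w))"
      using z w by (simp add: hadd_cs grp_boundaries)
    also have "\<dots> = cs (boundaries (D i) n) (sdiff (lin \<phi> z) (lin \<phi> w))"
      using PhiC[OF i] fz by (simp add: finite_sdiff lin_sdiff)
    also have "\<dots> = hadd (Phi i X) (Phi i Y)"
      using z w PhiC[OF i] fz by (simp add: hadd_cs grp_boundaries)
    finally show "Phi i (hadd X Y) = hadd (Phi i X) (Phi i Y)" .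
  next
    fix i X assume i: "Suc i < m" and X: "X \<in> homology (C i) n"
    obtain z where z: "z \<in> cycles (C i) n" "X = cs (boundaries (C i) n) z"
      using X by (auto simp: homology_cs)
    have i': "i < m" using i by simp
    have sC: "boundaries (C i) n \<subseteq> boundaries (C (Suc i)) n" using nC[OF i] by (intro bd_mono) auto
    have sD: "boundaries (D i) n \<subseteq> boundaries (D (Suc i)) n" using nD[OF i] by (intro bd_mono) auto
    have "Phi (Suc i) (hincl (C (Suc i)) n X) = Phi (Suc i) (cs (boundaries (C (Suc i)) n) z)"
      using z hincl_cs[OF sC e0] by simp
    also have "\<dots> = cs (boundaries (D (Suc i)) n) (lin \<phi> z)" using PhiC[OF i] z fin[OF z(1)] by simp
    also have "\<dots> = hincl (D (Suc i)) n (Phi i X)"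
      using z hincl_cs[OF sD e0] PhiC[OF i'] fin[OF z(1)] by simp
    finally show "Phi (Suc i) (hincl (C (Suc i)) n X) = hincl (D (Suc i)) n (Phi i X)" .
  qed
qed



lemma sub_simps[simp]:
  "bas (sub_cx C ps i) = {x\<in>bas C. idx C x \<in> set (take (Suc i) ps)}"
  "deg (sub_cx C ps i) = deg C" "bd (sub_cx C ps i) = bd C" "idx (sub_cx C ps i) = idx C"
  by (simp_all add: sub_cx_def)

lemma simp_cx_simps[simp]:
  "bas (simp_cx L ix) = L" "deg (simp_cx L ix) = (\<lambda>\<sigma>. int (card \<sigma>) - 1)"
  "idx (simp_cx L ix) = ix" "bd (simp_cx L ix) = (\<lambda>\<sigma>. {\<sigma> - {v} | v. v \<in> \<sigma> \<and> 2 \<le> card \<sigma>})"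
  by (simp_all add: simp_cx_def)

lemma down:
  assumes fc: "f_compatible P le fP ps" and q: "q \<in> P" and p: "p \<in> set (take (Suc i) ps)" and l: "le q p"
  shows "q \<in> set (take (Suc i) ps)"
proof -
  obtain j where j: "j < length (take (Suc i) ps)" "take (Suc i) ps ! j = p"
    using p by (auto simp: in_set_conv_nth)
  have j': "j < length ps" "j \<le> i" "ps ! j = p" using j by auto
  obtain k where k: "k < length ps" "ps ! k = q" using q fc by (auto simp: f_compatible_def in_set_conv_nth)
  have "k \<le> j" using fc k j' l unfolding f_compatible_def by blast
  then have "k < length (take (Suc i) ps)" "take (Suc i) ps ! k = q" using k j' by auto
  then show ?thesis by (metis nth_mem)
qed

lemma sub_map:
  assumes fc: "f_compatible P le fP ps"
    and x: "x \<in> bas (sub_cx C ps i)" and h: "h x \<subseteq> bas D" "\<forall>y\<in>h x. le (idx D y) (idx C x)"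
    and P: "\<forall>y\<in>bas D. idx D y \<in> P"
  shows "h x \<subseteq> bas (sub_cx D ps i)"
  using x h P down[OF fc] by auto



theorem proposition12:
  fixes K :: "'v set set" and V :: "'v set set set" and P :: "'p set"
    and le :: "'p \<Rightarrow> 'p \<Rightarrow> bool" and M :: "'p \<Rightarrow> 'v set set"
    and Cb :: "('b, 'p) bcx" and f :: "'v set \<Rightarrow> real" and fP :: "'p \<Rightarrow> real"
    and ps :: "'p list"
  assumes "simplicial_complex K"
    and "multivector_field K V"
    and "morse_decomposition K V P le M"
    and "conley_complex P le (simp_cx K (morse_idx P M)) Cb"
    and "lyapunov P le M f fP"
    and "f_compatible P le fP ps"
  shows "\<forall>n::int.
      hpm_iso (length ps) n (\<lambda>i. sub_cx Cb ps i) (\<lambda>i. sub_cx (simp_cx K (morse_idx P M)) ps i)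
    \<and> hpm_iso (length ps) n (\<lambda>i. sub_cx (simp_cx K (morse_idx P M)) ps i)
                           (\<lambda>i. simp_cx (Kpre M ps i) (\<lambda>_. ()))"
proof
  fix n :: int
  note sc = assms(1) and md = assms(3) and cc = assms(4) and fc = assms(6)
  define ix where "ix = morse_idx P M"
  define SK where "SK = simp_cx K ix"
  have UK: "\<Union>(M ` P) = K" and disj: "\<And>p q. p \<in> P \<Longrightarrow> q \<in> P \<Longrightarrow> p \<noteq> q \<Longrightarrow> M p \<inter> M q = {}"
    using md unfolding morse_decomposition_def by auto
  have ixM: "ix x = p" if pP: "p \<in> P" and xM: "x \<in> M p" for p x
  proof -
    have u: "\<And>q. q \<in> P \<and> x \<in> M q \<Longrightarrow> q = p" using disj pP xM by blast
    show "ix x = p" unfolding ix_def morse_idx_def using pP xM u by (intro the_equality) blast+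
  qed
  have ixK: "ix x \<in> P \<and> x \<in> M (ix x)" if xK: "x \<in> K" for x
  proof -
    obtain p where p: "p \<in> P" "x \<in> M p" using UK xK by blast
    then show ?thesis using ixM by simp
  qed
  have finK: "finite x" if "x \<in> K" for x using sc that by (simp add: simplicial_complex_def)
  have fbK: "finite (bd SK x)" if "x \<in> K" for x
  proof -
    have "bd SK x \<subseteq> (\<lambda>v. x - {v}) ` x" by (auto simp: SK_def)
    then show ?thesis using finK[OF that] by (meson finite_imageI finite_subset)
  qed
  have pf: "pfcc P le Cb" and he: "fhtpy_equiv le SK Cb"
    using cc by (simp_all add: conley_complex_def SK_def ix_def)
  obtain \<phi> \<phi>' where ph: "fchain_map le SK Cb \<phi>" and ph': "fchain_map le Cb SK \<phi>'"
    and h1: "fhomotopic le SK SK (\<lambda>x. lin \<phi>' (\<phi> x)) (\<lambda>x. {x})"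
    and h2: "fhomotopic le Cb Cb (\<lambda>x. lin \<phi> (\<phi>' x)) (\<lambda>x. {x})"
    using he unfolding fhtpy_equiv_def by blast
  obtain S where S: "lmap SK SK 1 S" "pfiltered le SK SK S"
    "\<forall>x\<in>bas SK. sdiff {x} (lin \<phi>' (\<phi> x)) = sdiff (lin (bd SK) (S x)) (lin S (bd SK x))"
    using h1 unfolding fhomotopic_def by blast
  obtain T where T: "lmap Cb Cb 1 T" "pfiltered le Cb Cb T"
    "\<forall>x\<in>bas Cb. sdiff {x} (lin \<phi> (\<phi>' x)) = sdiff (lin (bd Cb) (T x)) (lin T (bd Cb x))"
    using h2 unfolding fhomotopic_def by blast
  have PCb: "\<forall>y\<in>bas Cb. idx Cb y \<in> P" using pf by (simp add: pfcc_def)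
  have PSK: "\<forall>y\<in>bas SK. idx SK y \<in> P" using ixK by (simp add: SK_def)
  have fbCb: "\<And>x. x \<in> bas Cb \<Longrightarrow> finite (bd Cb x)" using pf by (simp add: pfcc_def)
  have L1: "lev (sub_cx Cb ps i) (sub_cx SK ps i) \<phi>' \<phi> T" for i
  proof
    fix x assume x: "x \<in> bas (sub_cx Cb ps i)"
    then have xb: "x \<in> bas Cb" by simp
    show "finite (bd (sub_cx Cb ps i) x)" using fbCb xb by simp
    have "\<phi>' x \<subseteq> bas (sub_cx SK ps i)"
      using ph' xb by (intro sub_map[OF fc x _ _ PSK]) (auto simp: fchain_map_def lmap_def pfiltered_def)
    then show "finite (\<phi>' x) \<and> \<phi>' x \<subseteq> bas (sub_cx SK ps i) \<and>
      (\<forall>y\<in>\<phi>' x. deg (sub_cx SK ps i) y = deg (sub_cx Cb ps i) x + 0) \<and>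
      lin (bd (sub_cx SK ps i)) (\<phi>' x) = lin \<phi>' (bd (sub_cx Cb ps i) x)"
      using ph' xb by (simp add: fchain_map_def lmap_def)
    have "T x \<subseteq> bas (sub_cx Cb ps i)"
      using T xb by (intro sub_map[OF fc x _ _ PCb]) (auto simp: lmap_def pfiltered_def)
    then show "finite (T x) \<and> T x \<subseteq> bas (sub_cx Cb ps i) \<and>
      (\<forall>y\<in>T x. deg (sub_cx Cb ps i) y = deg (sub_cx Cb ps i) x + 1) \<and>
      sdiff {x} (lin \<phi> (\<phi>' x)) = sdiff (lin (bd (sub_cx Cb ps i)) (T x)) (lin T (bd (sub_cx Cb ps i) x))"
      using T xb by (simp add: lmap_def)
  next
    fix x assume x: "x \<in> bas (sub_cx SK ps i)"
    then have xb: "x \<in> bas SK" by simp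
    have "\<phi> x \<subseteq> bas (sub_cx Cb ps i)"
      using ph xb by (intro sub_map[OF fc x _ _ PCb]) (auto simp: fchain_map_def lmap_def pfiltered_def)
    then show "finite (\<phi> x) \<and> \<phi> x \<subseteq> bas (sub_cx Cb ps i) \<and>
      (\<forall>y\<in>\<phi> x. deg (sub_cx Cb ps i) y = deg (sub_cx SK ps i) x + 0)"
      using ph xb by (simp add: fchain_map_def lmap_def)
  qed
  have L2: "lev (sub_cx SK ps i) (sub_cx Cb ps i) \<phi> \<phi>' S" for i
  proof
    fix x assume x: "x \<in> bas (sub_cx SK ps i)"
    then have xb: "x \<in> bas SK" by simp
    show "finite (bd (sub_cx SK ps i) x)" using fbK xb by (simp add: SK_def)
    have "\<phi> x \<subseteq> bas (sub_cx Cb ps i)"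
      using ph xb by (intro sub_map[OF fc x _ _ PCb]) (auto simp: fchain_map_def lmap_def pfiltered_def)
    then show "finite (\<phi> x) \<and> \<phi> x \<subseteq> bas (sub_cx Cb ps i) \<and>
      (\<forall>y\<in>\<phi> x. deg (sub_cx Cb ps i) y = deg (sub_cx SK ps i) x + 0) \<and>
      lin (bd (sub_cx Cb ps i)) (\<phi> x) = lin \<phi> (bd (sub_cx SK ps i) x)"
      using ph xb by (simp add: fchain_map_def lmap_def)
    have "S x \<subseteq> bas (sub_cx SK ps i)"
      using S xb by (intro sub_map[OF fc x _ _ PSK]) (auto simp: lmap_def pfiltered_def)
    then show "finite (S x) \<and> S x \<subseteq> bas (sub_cx SK ps i) \<and>
      (\<forall>y\<in>S x. deg (sub_cx SK ps i) y = deg (sub_cx SK ps i) x + 1) \<and>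
      sdiff {x} (lin \<phi>' (\<phi> x)) = sdiff (lin (bd (sub_cx SK ps i)) (S x)) (lin S (bd (sub_cx SK ps i) x))"
      using S xb by (simp add: lmap_def)
  next
    fix x assume x: "x \<in> bas (sub_cx Cb ps i)"
    then have xb: "x \<in> bas Cb" by simp
    have "\<phi>' x \<subseteq> bas (sub_cx SK ps i)"
      using ph' xb by (intro sub_map[OF fc x _ _ PSK]) (auto simp: fchain_map_def lmap_def pfiltered_def)
    then show "finite (\<phi>' x) \<and> \<phi>' x \<subseteq> bas (sub_cx SK ps i) \<and>
      (\<forall>y\<in>\<phi>' x. deg (sub_cx SK ps i) y = deg (sub_cx Cb ps i) x + 0)"
      using ph' xb by (simp add: fchain_map_def lmap_def)
  qed
  have nest: "set (take (Suc i) ps) \<subseteq> set (take (Suc (Suc i)) ps)" for i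
    by (simp add: set_take_subset_set_take)
  have part1: "hpm_iso (length ps) n (\<lambda>i. sub_cx Cb ps i) (\<lambda>i. sub_cx SK ps i)"
    by (rule hpm_iso_generic[OF L1 L2]) (use nest in auto)
  define D where "D = (\<lambda>i. simp_cx (Kpre M ps i) (\<lambda>_. ()))"
  have basD: "bas (D i) = bas (sub_cx SK ps i)" for i
  proof -
    have "set (take (Suc i) ps) \<subseteq> P" using fc by (auto simp: f_compatible_def dest: in_set_takeD)
    moreover have "\<And>p. p \<in> P \<Longrightarrow> M p \<subseteq> K" using UK by blast
    ultimately show ?thesis
      unfolding D_def Kpre_def SK_def using ixK ixM by auto
  qed
  have L3: "lev (sub_cx SK ps i) (D i) (\<lambda>x. {x}) (\<lambda>x. {x}) (\<lambda>_. {})" for i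
  proof
    fix x assume x: "x \<in> bas (sub_cx SK ps i)"
    then have xb: "x \<in> K" by (simp add: SK_def)
    show "finite (bd (sub_cx SK ps i) x)" using fbK xb by simp
    have fb: "finite (bd (D i) x)" using fbK xb by (simp add: SK_def D_def)
    show "finite {x} \<and> {x} \<subseteq> bas (D i) \<and> (\<forall>y\<in>{x}. deg (D i) y = deg (sub_cx SK ps i) x + 0) \<and>
      lin (bd (D i)) {x} = lin (\<lambda>x. {x}) (bd (sub_cx SK ps i) x)"
      using x basD fb lin_id[OF fb] by (simp add: D_def SK_def)
    show "finite {} \<and> {} \<subseteq> bas (sub_cx SK ps i) \<and> (\<forall>y\<in>{}. deg (sub_cx SK ps i) y = deg (sub_cx SK ps i) x + 1) \<and>
      sdiff {x} (lin (\<lambda>x. {x}) {x}) = sdiff (lin (bd (sub_cx SK ps i)) {}) (lin (\<lambda>_. {}) (bd (sub_cx SK ps i) x))"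
      by (simp add: lin_zero)
  next
    fix x assume x: "x \<in> bas (D i)"
    then show "finite {x} \<and> {x} \<subseteq> bas (sub_cx SK ps i) \<and> (\<forall>y\<in>{x}. deg (sub_cx SK ps i) y = deg (D i) x + 0)"
      using basD by (simp add: D_def SK_def)
  qed
  have L4: "lev (D i) (sub_cx SK ps i) (\<lambda>x. {x}) (\<lambda>x. {x}) (\<lambda>_. {})" for i
  proof
    fix x assume x: "x \<in> bas (D i)"
    then have xb: "x \<in> K" using basD by (simp add: SK_def)
    have fb: "finite (bd (D i) x)" using fbK xb by (simp add: SK_def D_def)
    show "finite (bd (D i) x)" by (rule fb)
    show "finite {x} \<and> {x} \<subseteq> bas (sub_cx SK ps i) \<and> (\<forall>y\<in>{x}. deg (sub_cx SK ps i) y = deg (D i) x + 0) \<and>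
      lin (bd (sub_cx SK ps i)) {x} = lin (\<lambda>x. {x}) (bd (D i) x)"
      using x basD fb lin_id[OF fb] by (simp add: D_def SK_def)
    show "finite {} \<and> {} \<subseteq> bas (D i) \<and> (\<forall>y\<in>{}. deg (D i) y = deg (D i) x + 1) \<and>
      sdiff {x} (lin (\<lambda>x. {x}) {x}) = sdiff (lin (bd (D i)) {}) (lin (\<lambda>_. {}) (bd (D i) x))"
      by (simp add: lin_zero)
  next
    fix x assume x: "x \<in> bas (sub_cx SK ps i)"
    then show "finite {x} \<and> {x} \<subseteq> bas (D i) \<and> (\<forall>y\<in>{x}. deg (D i) y = deg (sub_cx SK ps i) x + 0)"
      using basD by (simp add: D_def SK_def)
  qed
  have part2: "hpm_iso (length ps) n (\<lambda>i. sub_cx SK ps i) D"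
  proof (rule hpm_iso_generic[OF L3 L4])
    fix i assume "Suc i < length ps"
    show "bas (sub_cx SK ps i) \<subseteq> bas (sub_cx SK ps (Suc i)) \<and> deg (sub_cx SK ps (Suc i)) = deg (sub_cx SK ps i) \<and>
      bd (sub_cx SK ps (Suc i)) = bd (sub_cx SK ps i)" using nest by auto
    show "bas (D i) \<subseteq> bas (D (Suc i)) \<and> deg (D (Suc i)) = deg (D i) \<and> bd (D (Suc i)) = bd (D i)"
      using nest basD[of i] basD[of "Suc i"] by (auto simp: D_def)
  qed
  show "hpm_iso (length ps) n (\<lambda>i. sub_cx Cb ps i) (\<lambda>i. sub_cx (simp_cx K (morse_idx P M)) ps i)
    \<and> hpm_iso (length ps) n (\<lambda>i. sub_cx (simp_cx K (morse_idx P M)) ps i)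
                           (\<lambda>i. simp_cx (Kpre M ps i) (\<lambda>_. ()))"
    using part1 part2 unfolding SK_def ix_def D_def by simp
qed

end
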